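(* Let $\mathcal{A}=\{A_1,\dots,A_m\}$ be a bimodal collection of pairwise disjoint nonempty subsets of a finite abelian group $G$, with internal difference groups $H_1,\dots,H_m$, such that $|A_1|<|H_1|$ and $|A_i|=|H_i|$ for all $2\le i\le m$. Then: (1) for all $2\le i\le m$, $A_i$ is a coset of $H_i$ and $H_i$ is a subgroup of $H_1$; (2) $A_1$ is a proper subset of a coset of $H_1$ and is a union of cosets of the subgroup $D=H_2+H_3+\dots+H_m$.
   Context: $G$ is written additively. The internal difference group $H_i$ of $A_i$ is the subgroup generated by all $x-y$ with $x,y\in A_i$; $A_i$ lies in a single coset of $H_i$ and $|A_i|\le|H_i|$. A collection $\{A_1,\dots,A_m\}$ of pairwise disjoint subsets of $G$ is bimodal if for every $i$ and every $\delta\in G\setminus\{0\}$, the number $N_i(\delta)$ of pairs $(a,b)$ with $a\in A_i$, $b\in A_j$ for some $j\neq i$, and $a-b=\delta$, satisfies $N_i(\delta)\in\{0,|A_i|\}$. An empty sum of subgroups is $\{0\}$. *)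

theory Defs
  imports Main "HOL-Computational_Algebra.Group_Closure"
begin

definition diff_group :: "'a::ab_group_add set \<Rightarrow> 'a set" where
  "diff_group A = group_closure {x - y | x y. x \<in> A \<and> y \<in> A}"

definition N_count :: "(nat \<Rightarrow> 'a::ab_group_add set) \<Rightarrow> nat \<Rightarrow> nat \<Rightarrow> 'a \<Rightarrow> nat" where
  "N_count A m i \<delta> = card {(a, b). a \<in> A i \<and> (\<exists>j\<in>{1..m}. j \<noteq> i \<and> b \<in> A j) \<and> a - b = \<delta>}"

definition bimodal :: "(nat \<Rightarrow> 'a::ab_group_add set) \<Rightarrow> nat \<Rightarrow> bool" where
  "bimodal A m \<longleftrightarrow> (\<forall>i\<in>{1..m}. \<forall>\<delta>. \<delta> \<noteq> 0 \<longrightarrow> N_count A m i \<delta> \<in> {0, card (A i)})"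

definition is_coset :: "'a::ab_group_add set \<Rightarrow> 'a set \<Rightarrow> bool" where
  "is_coset C H \<longleftrightarrow> (\<exists>x. C = (\<lambda>h. x + h) ` H)"

definition is_subgroup :: "'a::ab_group_add set \<Rightarrow> bool" where
  "is_subgroup H \<longleftrightarrow> 0 \<in> H \<and> (\<forall>x\<in>H. \<forall>y\<in>H. x - y \<in> H)"

definition sumset :: "'a::ab_group_add set \<Rightarrow> 'a set \<Rightarrow> 'a set" where
  "sumset X Y = {x + y | x y. x \<in> X \<and> y \<in> Y}"

definition subgroup_sum :: "(nat \<Rightarrow> 'a::ab_group_add set) \<Rightarrow> nat list \<Rightarrow> 'a set" where
  "subgroup_sum H is = foldr (\<lambda>i S. sumset (H i) S) is {0}"

definition union_of_cosets :: "'a::ab_group_add set \<Rightarrow> 'a set \<Rightarrow> bool" where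
  "union_of_cosets A D \<longleftrightarrow> (\<exists>X. A = (\<Union>x\<in>X. (\<lambda>d. x + d) ` D))"

end

theory Submission
  imports Defs
begin

lemma dg_gen: "a \<in> A \<Longrightarrow> b \<in> A \<Longrightarrow> a - b \<in> diff_group A"
  unfolding diff_group_def by (rule group_closure.base) blast

lemma dg_add: "x \<in> diff_group A \<Longrightarrow> y \<in> diff_group A \<Longrightarrow> x + y \<in> diff_group A"
  unfolding diff_group_def by (rule group_closure_add)

lemma dg_diff: "x \<in> diff_group A \<Longrightarrow> y \<in> diff_group A \<Longrightarrow> x - y \<in> diff_group A"
  unfolding diff_group_def by (rule group_closure.diff)

lemma dg_minus: "x \<in> diff_group A \<Longrightarrow> - x \<in> diff_group A"
  unfolding diff_group_def by simp

lemma dg_zero: "0 \<in> diff_group A"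
  unfolding diff_group_def by simp

lemma periodic_closure:
  fixes P :: "'a::ab_group_add set"
  assumes "\<forall>x\<in>P. \<forall>a\<in>A. \<forall>a'\<in>A. x + (a - a') \<in> P"
    and "g \<in> diff_group A"
  shows "\<forall>x\<in>P. x + g \<in> P \<and> x - g \<in> P"
proof -
  have "g \<in> group_closure {x - y | x y. x \<in> A \<and> y \<in> A}" using assms(2) unfolding diff_group_def .
  then show ?thesis
  proof induction
    case (base s)
    then show ?case
    proof
      assume "s = 0" then show ?thesis by simp
    next
      assume "s \<in> {x - y | x y. x \<in> A \<and> y \<in> A}"
      then obtain a a' where s: "s = a - a'" "a \<in> A" "a' \<in> A" by blast
      have "x - (a - a') = x + (a' - a)" for x by (simp add: algebra_simps)
      then show ?thesis using assms(1) s by (metis add_diff_eq)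
    qed
  next
    case (diff s t)
    show ?case
    proof
      fix x assume x: "x \<in> P"
      have "x + (s - t) = (x + s) - t" "x - (s - t) = (x - s) + t" by (simp_all add: algebra_simps)
      then show "x + (s - t) \<in> P \<and> x - (s - t) \<in> P" using diff x by metis
    qed
  qed
qed

lemma bimodal_periodic:
  fixes A :: "nat \<Rightarrow> 'a::{ab_group_add, finite} set"
  assumes disj: "\<forall>i\<in>{1..m}. \<forall>j\<in>{1..m}. i \<noteq> j \<longrightarrow> A i \<inter> A j = {}"
    and bim: "bimodal A m" and i: "i \<in> {1..m}"
    and b: "\<exists>j\<in>{1..m}. j \<noteq> i \<and> b \<in> A j"
    and a: "a \<in> A i" and a': "a' \<in> A i"
  shows "\<exists>j\<in>{1..m}. j \<noteq> i \<and> b + (a' - a) \<in> A j"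
proof -
  define B where "B = {b. \<exists>j\<in>{1..m}. j \<noteq> i \<and> b \<in> A j}"
  define \<delta> where "\<delta> = a - b"
  have bB: "b \<in> B" using b B_def by auto
  have aB: "a \<notin> B" using disj a i unfolding B_def by blast
  have d0: "\<delta> \<noteq> 0" using aB bB \<delta>_def by auto
  define S where "S = {(x, y). x \<in> A i \<and> (\<exists>j\<in>{1..m}. j \<noteq> i \<and> y \<in> A j) \<and> x - y = \<delta>}"
  have Ncount: "N_count A m i \<delta> = card S" unfolding N_count_def S_def by simp
  have Sin: "(a, b) \<in> S" using a b unfolding S_def \<delta>_def by auto
  have "card S \<noteq> 0" using Sin by (simp add: card_gt_0_iff[symmetric]) (auto intro: finite_subset)
  moreover have "N_count A m i \<delta> \<in> {0, card (A i)}" using bim i d0 unfolding bimodal_def by blast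
  ultimately have cS: "card S = card (A i)" using Ncount by auto
  define T where "T = {x \<in> A i. x - \<delta> \<in> B}"
  have "S = (\<lambda>x. (x, x - \<delta>)) ` T"
    unfolding S_def T_def B_def by (auto simp: algebra_simps image_iff) (metis atLeastAtMost_iff)
  moreover have "inj_on (\<lambda>x. (x, x - \<delta>)) T" by (auto simp: inj_on_def)
  ultimately have "card S = card T" by (simp add: card_image)
  then have "card T = card (A i)" using cS by simp
  moreover have "T \<subseteq> A i" unfolding T_def by auto
  ultimately have "T = A i" by (simp add: card_subset_eq)
  then have "a' - \<delta> \<in> B" using a' unfolding T_def by auto
  moreover have "a' - \<delta> = b + (a' - a)" unfolding \<delta>_def by (simp add: algebra_simps)
  ultimately show ?thesis unfolding B_def by auto
qed

lemma B_periodic: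
  fixes A :: "nat \<Rightarrow> 'a::{ab_group_add, finite} set"
  assumes disj: "\<forall>i\<in>{1..m}. \<forall>j\<in>{1..m}. i \<noteq> j \<longrightarrow> A i \<inter> A j = {}"
    and bim: "bimodal A m" and i: "i \<in> {1..m}"
    and b: "\<exists>j\<in>{1..m}. j \<noteq> i \<and> b \<in> A j"
    and h: "h \<in> diff_group (A i)"
  shows "(\<exists>j\<in>{1..m}. j \<noteq> i \<and> b + h \<in> A j) \<and> (\<exists>j\<in>{1..m}. j \<noteq> i \<and> b - h \<in> A j)"
proof -
  define B where "B = {b. \<exists>j\<in>{1..m}. j \<noteq> i \<and> b \<in> A j}"
  have "\<forall>x\<in>B. \<forall>a\<in>A i. \<forall>a'\<in>A i. x + (a - a') \<in> B"
    using bimodal_periodic[OF disj bim i] unfolding B_def by blast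
  from periodic_closure[OF this h] b show ?thesis unfolding B_def by blast
qed

lemma sumset_periodic:
  assumes "\<forall>k\<in>set l. \<forall>x\<in>S. \<forall>h\<in>H k. x + h \<in> S"
  shows "\<forall>x\<in>S. \<forall>d\<in>subgroup_sum H l. x + d \<in> S"
  using assms
proof (induction l)
  case Nil
  then show ?case by (simp add: subgroup_sum_def)
next
  case (Cons k l)
  show ?case
  proof (intro ballI)
    fix x d assume x: "x \<in> S" and d: "d \<in> subgroup_sum H (k # l)"
    then obtain h s where hs: "d = h + s" "h \<in> H k" "s \<in> subgroup_sum H l"
      unfolding subgroup_sum_def sumset_def by auto
    have "x + h \<in> S" using Cons.prems x hs by auto
    then have "(x + h) + s \<in> S" using Cons hs by auto
    then show "x + d \<in> S" using hs by (simp add: add.assoc)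
  qed
qed

lemma zero_subgroup_sum: "\<forall>k\<in>set l. 0 \<in> H k \<Longrightarrow> 0 \<in> subgroup_sum H l"
proof (induction l)
  case Nil then show ?case by (simp add: subgroup_sum_def)
next
  case (Cons k l)
  then have "0 \<in> H k" "0 \<in> subgroup_sum H l" by auto
  then show ?case unfolding subgroup_sum_def sumset_def by force
qed

theorem proposition3p13:
  fixes A :: "nat \<Rightarrow> 'a::{ab_group_add, finite} set"
    and m :: nat
  assumes m: "1 \<le> m"
    and disj: "\<forall>i\<in>{1..m}. \<forall>j\<in>{1..m}. i \<noteq> j \<longrightarrow> A i \<inter> A j = {}"
    and nonempty: "\<forall>i\<in>{1..m}. A i \<noteq> {}"
    and bim: "bimodal A m"
    and first: "card (A 1) < card (diff_group (A 1))"
    and rest: "\<forall>i\<in>{2..m}. card (A i) = card (diff_group (A i))"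
  shows "(\<forall>i\<in>{2..m}. is_coset (A i) (diff_group (A i))
            \<and> is_subgroup (diff_group (A i)) \<and> diff_group (A i) \<subseteq> diff_group (A 1))
       \<and> (\<exists>C. is_coset C (diff_group (A 1)) \<and> A 1 \<subset> C)
       \<and> union_of_cosets (A 1) (subgroup_sum (\<lambda>i. diff_group (A i)) [2..<m+1])"
proof -
  define H where "H i = diff_group (A i)" for i
  have sub: "is_subgroup (H i)" for i
    unfolding is_subgroup_def H_def using dg_zero dg_diff by blast
  have coset: "A i = (\<lambda>h. c + h) ` H i" if i: "i \<in> {2..m}" and c: "c \<in> A i" for i c
  proof -
    have "A i \<subseteq> (\<lambda>h. c + h) ` H i"
    proof
      fix y assume "y \<in> A i"
      then have "y - c \<in> H i" using c dg_gen unfolding H_def by blast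
      then show "y \<in> (\<lambda>h. c + h) ` H i" by (auto intro: image_eqI[where x="y - c"])
    qed
    moreover have "card ((\<lambda>h. c + h) ` H i) = card (A i)"
      using rest i unfolding H_def by (simp add: card_image inj_on_def)
    ultimately show ?thesis by (simp add: card_subset_eq)
  qed
  have Aiper: "x + h \<in> A i" if i: "i \<in> {2..m}" and x: "x \<in> A i" and h: "h \<in> H i" for i x h
  proof -
    have "A i = (\<lambda>h. x + h) ` H i" using coset[OF i x] .
    moreover have "h \<in> H i" using h .
    ultimately show ?thesis by blast
  qed
  have i1: "1 \<in> {1..m}" using m by simp
  obtain a0 where a0: "a0 \<in> A 1" using nonempty i1 by blast
  have A1per: "x + h \<in> A 1" if i: "i \<in> {2..m}" and x: "x \<in> A 1" and h: "h \<in> H i" for i x h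
  proof (rule ccontr)
    assume nx: "x + h \<notin> A 1"
    have im: "i \<in> {1..m}" "i \<noteq> 1" using i by auto
    have "\<exists>j\<in>{1..m}. j \<noteq> i \<and> x \<in> A j" using x i1 im by (intro bexI[of _ 1]) auto
    then obtain j where j: "j \<in> {1..m}" "j \<noteq> i" "x + h \<in> A j"
      using B_periodic[OF disj bim im(1) _ h[unfolded H_def]] by blast
    have j1: "j \<noteq> 1" using j nx by auto
    have inA1: "x + y \<in> A 1" if y: "y \<in> H 1" for y
    proof -
      have "\<exists>k\<in>{1..m}. k \<noteq> 1 \<and> x + h + y \<in> A k"
        using B_periodic[OF disj bim i1, of "x + h" y] j j1 y unfolding H_def by blast
      then obtain k where k: "k \<in> {1..m}" "k \<noteq> 1" "x + h + y \<in> A k" by blast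
      have "\<exists>k\<in>{1..m}. x + y \<in> A k"
      proof (cases "k = i")
        case True
        have "(x + h + y) + (- h) \<in> A i" using Aiper[OF i] k True h dg_minus unfolding H_def by blast
        then show ?thesis using im by (auto simp: algebra_simps)
      next
        case False
        have "\<exists>j\<in>{1..m}. j \<noteq> i \<and> (x + h + y) - h \<in> A j"
          using B_periodic[OF disj bim im(1), of "x + h + y" h] k False h unfolding H_def by blast
        then show ?thesis by (auto simp: algebra_simps)
      qed
      then obtain k' where k': "k' \<in> {1..m}" "x + y \<in> A k'" by blast
      show ?thesis
      proof (cases "k' = 1")
        case True then show ?thesis using k' by simp
      next
        case False
        have "\<exists>j\<in>{1..m}. j \<noteq> 1 \<and> (x + y) - y \<in> A j"
          using B_periodic[OF disj bim i1, of "x + y" y] k' False y unfolding H_def by blast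
        then have "\<exists>j\<in>{1..m}. j \<noteq> 1 \<and> x \<in> A j" by simp
        then show ?thesis using disj x i1 by blast
      qed
    qed
    then have "(\<lambda>y. x + y) ` H 1 \<subseteq> A 1" by blast
    then have "card ((\<lambda>y. x + y) ` H 1) \<le> card (A 1)" by (simp add: card_mono)
    moreover have "card ((\<lambda>y. x + y) ` H 1) = card (H 1)" by (simp add: card_image inj_on_def)
    ultimately show False using first unfolding H_def by simp
  qed
  have part1: "\<forall>i\<in>{2..m}. is_coset (A i) (H i) \<and> is_subgroup (H i) \<and> H i \<subseteq> H 1"
  proof
    fix i assume i: "i \<in> {2..m}"
    obtain c where c: "c \<in> A i" using nonempty i by fastforce
    have "is_coset (A i) (H i)" unfolding is_coset_def using coset[OF i c] by blast
    moreover have "H i \<subseteq> H 1"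
    proof
      fix h assume h: "h \<in> H i"
      have "a0 + h \<in> A 1" using A1per[OF i a0 h] .
      then have "(a0 + h) - a0 \<in> H 1" using a0 dg_gen unfolding H_def by blast
      then show "h \<in> H 1" by simp
    qed
    ultimately show "is_coset (A i) (H i) \<and> is_subgroup (H i) \<and> H i \<subseteq> H 1" using sub by blast
  qed
  have part2: "\<exists>C. is_coset C (H 1) \<and> A 1 \<subset> C"
  proof (intro exI conjI)
    show "is_coset ((\<lambda>h. a0 + h) ` H 1) (H 1)" unfolding is_coset_def by blast
    have sb: "A 1 \<subseteq> (\<lambda>h. a0 + h) ` H 1"
    proof
      fix y assume "y \<in> A 1"
      then have "y - a0 \<in> H 1" using a0 dg_gen unfolding H_def by blast
      then show "y \<in> (\<lambda>h. a0 + h) ` H 1" by (auto intro: image_eqI[where x="y - a0"])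
    qed
    moreover have "card ((\<lambda>h. a0 + h) ` H 1) = card (H 1)" by (simp add: card_image inj_on_def)
    ultimately show "A 1 \<subset> (\<lambda>h. a0 + h) ` H 1" using first unfolding H_def by auto
  qed
  have part3: "union_of_cosets (A 1) (subgroup_sum H [2..<m+1])"
  proof -
    have "\<forall>k\<in>set [2..<m+1]. \<forall>x\<in>A 1. \<forall>h\<in>H k. x + h \<in> A 1"
      using A1per by (metis atLeastAtMost_iff atLeastLessThan_iff less_Suc_eq_le semiring_norm(174) set_upt)
    then have per: "\<forall>x\<in>A 1. \<forall>d\<in>subgroup_sum H [2..<m+1]. x + d \<in> A 1"
      by (rule sumset_periodic)
    have z: "0 \<in> subgroup_sum H [2..<m+1]"
      by (rule zero_subgroup_sum) (auto simp: H_def dg_zero)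
    have "A 1 = (\<Union>x\<in>A 1. (\<lambda>d. x + d) ` subgroup_sum H [2..<m+1])"
    proof
      show "A 1 \<subseteq> (\<Union>x\<in>A 1. (\<lambda>d. x + d) ` subgroup_sum H [2..<m+1])"
        using z by force
      show "(\<Union>x\<in>A 1. (\<lambda>d. x + d) ` subgroup_sum H [2..<m+1]) \<subseteq> A 1"
        using per by blast
    qed
    then show ?thesis unfolding union_of_cosets_def by blast
  qed
  show ?thesis using part1 part2 part3 unfolding H_def by simp
qed

end
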